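(* Assume $n\ge 3t+1$. In any execution of COOL, if $\eta^{[2]}=2$ then $\eta^{[1]}=2$.
   Context: Setting. $n$ processors indexed by $[1:n]$, pairwise joined by reliable private synchronous channels; recipients know senders. At most $t$ processors are dishonest, controlled by an adversary who may make them deviate arbitrarily (missing values replaced by a fixed default); the others are honest. Processor $i$ holds an $\ell$-bit initial message $\boldsymbol w_i$. $\phi$ is a default value different from every $\ell$-bit message. Logarithms are base 2. Code. $k=\lfloor t/5\rfloor+1$, $c=\lceil \max\{\ell,(t/5+1)\log(n+1)\}/k\rceil$. Messages are zero-padded to $kc$ bits and viewed in $GF(2^c)^k$. Integers in $[1:n]$ are identified with distinct nonzero elements of $GF(2^c)$; $\boldsymbol h_i\in GF(2^c)^k$ has entries $h_{i,j}=\prod_{p\in[1:k],\,p\ne j}\frac{i-p}{j-p}$ (field arithmetic). COOL, Phases 1–2 (honest processor $i$). Initialization: updated message $\boldsymbol w^{(i)}:=\boldsymbol w_i$, $y^{(i)}_j:=\boldsymbol h_j^{\mathsf T}\boldsymbol w_i$, $u_i(i):=1$. Phase 1. (a) Send $(y^{(i)}_j,y^{(i)}_i)$ to each $j\ne i$. (b) For $j\ne i$, link indicator $u_i(j):=1$ if the pair received from $j$ equals $(y^{(i)}_i,y^{(i)}_j)$, else $0$. Success indicator $s_i:=1$ if $\sum_{j=1}^n u_i(j)\ge n-t$; otherwise $s_i:=0$ and $\boldsymbol w^{(i)}:=\phi$. (c) Send $s_i$ to all; each processor records the indicator received from each $j$ (own for itself) and forms $\mathcal S_1=\{j:s_j=1\}$,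 $\mathcal S_0=\{j:s_j=0\}$ (views may differ between processors). Phase 2. If $s_i=1$: set $u_i(j):=0$ for all $j\in\mathcal S_0$; if now $\sum_j u_i(j)<n-t$, set $s_i:=0$, $\boldsymbol w^{(i)}:=\phi$ and send $s_i=0$ to all. Everyone overwrites recorded indicators with newly received ones and recomputes $\mathcal S_0,\mathcal S_1$. Notation. For $p\in\{1,2\}$, $s^{[p]}_i$ is the value of honest processor $i$'s success indicator at the end of Phase $p$, and $\eta^{[p]}$ is the number of distinct values in $\{\boldsymbol w_i: i\text{ honest},\ s^{[p]}_i=1\}$ (initial messages). *)

theory Defs
  imports Complex_Main
begin

definition kpar :: "nat \<Rightarrow> nat" where
  "kpar t = t div 5 + 1"

definition cpar :: "nat \<Rightarrow> nat \<Rightarrow> nat \<Rightarrow> nat" where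
  "cpar n t l = nat \<lceil>max (real l) ((real t / 5 + 1) * log 2 (real n + 1)) / real (kpar t)\<rceil>"

text \<open>Zero-pad a message to k*c bits and view it in GF(2^c)^k (components indexed 1..k),
  using a fixed identification bits of c-bit strings with field elements.\<close>
definition msg_vec :: "(bool list \<Rightarrow> 'f) \<Rightarrow> nat \<Rightarrow> nat \<Rightarrow> bool list \<Rightarrow> nat \<Rightarrow> 'f" where
  "msg_vec bits k c w m = bits (take c (drop ((m - 1) * c) (w @ replicate (k * c - length w) False)))"

definition hcoef :: "(nat \<Rightarrow> 'f::field) \<Rightarrow> nat \<Rightarrow> nat \<Rightarrow> nat \<Rightarrow> 'f" where
  "hcoef e k i j = (\<Prod>p\<in>{1..k} - {j}. (e i - e p) / (e j - e p))"

definition enc :: "(nat \<Rightarrow> 'f::field) \<Rightarrow> nat \<Rightarrow> (nat \<Rightarrow> 'f) \<Rightarrow> nat \<Rightarrow> 'f" where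
  "enc e k v j = (\<Sum>m\<in>{1..k}. hcoef e k j m * v m)"

definition Ycode :: "(nat \<Rightarrow> 'f::field) \<Rightarrow> (bool list \<Rightarrow> 'f) \<Rightarrow> nat \<Rightarrow> nat \<Rightarrow> nat
    \<Rightarrow> (nat \<Rightarrow> bool list) \<Rightarrow> nat \<Rightarrow> nat \<Rightarrow> 'f" where
  "Ycode e bits n t l w i j = enc e (kpar t) (msg_vec bits (kpar t) (cpar n t l) (w i)) j"

text \<open>Phase 1 link indicator u_i(j) of honest processor i.  The pair received from j is
  (Y j i, Y j j) if j is honest, and the adversarially chosen adv1 j i otherwise.\<close>
definition link1 :: "nat set \<Rightarrow> (nat \<Rightarrow> nat \<Rightarrow> 'f) \<Rightarrow> (nat \<Rightarrow> nat \<Rightarrow> 'f \<times> 'f) \<Rightarrow> nat \<Rightarrow> nat \<Rightarrow> bool" where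
  "link1 H Y adv1 i j =
     (j = i \<or> (if j \<in> H then (Y j i, Y j j) else adv1 j i) = (Y i i, Y i j))"

definition succ1 :: "nat \<Rightarrow> nat \<Rightarrow> nat set \<Rightarrow> (nat \<Rightarrow> nat \<Rightarrow> 'f) \<Rightarrow> (nat \<Rightarrow> nat \<Rightarrow> 'f \<times> 'f) \<Rightarrow> nat \<Rightarrow> bool" where
  "succ1 n t H Y adv1 i = (card {j \<in> {1..n}. link1 H Y adv1 i j} \<ge> n - t)"

text \<open>j \<in> S_0 in honest processor i's view after Phase 1(c); dishonest j sends adv2 j i.\<close>
definition inS0 :: "nat \<Rightarrow> nat \<Rightarrow> nat set \<Rightarrow> (nat \<Rightarrow> nat \<Rightarrow> 'f) \<Rightarrow> (nat \<Rightarrow> nat \<Rightarrow> 'f \<times> 'f)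
    \<Rightarrow> (nat \<Rightarrow> nat \<Rightarrow> bool) \<Rightarrow> nat \<Rightarrow> nat \<Rightarrow> bool" where
  "inS0 n t H Y adv1 adv2 i j =
     (if j \<in> H then \<not> succ1 n t H Y adv1 j else \<not> adv2 j i)"

definition succ2 :: "nat \<Rightarrow> nat \<Rightarrow> nat set \<Rightarrow> (nat \<Rightarrow> nat \<Rightarrow> 'f) \<Rightarrow> (nat \<Rightarrow> nat \<Rightarrow> 'f \<times> 'f)
    \<Rightarrow> (nat \<Rightarrow> nat \<Rightarrow> bool) \<Rightarrow> nat \<Rightarrow> bool" where
  "succ2 n t H Y adv1 adv2 i =
     (succ1 n t H Y adv1 i \<and>
      card {j \<in> {1..n}. link1 H Y adv1 i j \<and> \<not> inS0 n t H Y adv1 adv2 i j} \<ge> n - t)"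

definition eta :: "nat set \<Rightarrow> (nat \<Rightarrow> bool) \<Rightarrow> (nat \<Rightarrow> bool list) \<Rightarrow> nat" where
  "eta H s w = card (w ` {i \<in> H. s i})"

end

theory Submission imports Defs "HOL-Computational_Algebra.Polynomial" begin
lemma hcoef_diag:
  fixes e :: "nat \<Rightarrow> 'f::field"
  assumes inj: "inj_on e {1..k}" and m: "m \<in> {1..k}" and m': "m' \<in> {1..k}"
  shows "hcoef e k m m' = (if m' = m then 1 else 0)"
proof (cases "m' = m")
  case True
  have "hcoef e k m m' = (\<Prod>p\<in>{1..k} - {m}. 1)"
    unfolding hcoef_def True
  proof (rule prod.cong)
    fix p assume "p \<in> {1..k} - {m}"
    then have "e m \<noteq> e p" using inj m by (auto dest: inj_onD)
    then show "(e m - e p) / (e m - e p) = 1" by simp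
  qed simp
  then show ?thesis using True by simp
next
  case False
  have "m \<in> {1..k} - {m'}" using m False by auto
  then have "hcoef e k m m' = 0" unfolding hcoef_def
    by (intro prod_zero) auto
  then show ?thesis using False by simp
qed

lemma enc_zero:
  fixes e :: "nat \<Rightarrow> 'f::field"
  assumes inj: "inj_on e {1..n}" and kn: "k \<le> n" and P: "P \<subseteq> {1..n}" and cP: "card P \<ge> k"
    and z: "\<forall>p\<in>P. enc e k v p = 0" and m: "m \<in> {1..k}"
  shows "v m = 0"
proof -
  have injk: "inj_on e {1..k}" using inj kn by (auto intro: inj_on_subset)
  define L where "L m = smult (inverse (\<Prod>p\<in>{1..k} - {m}. (e m - e p))) (\<Prod>p\<in>{1..k} - {m}. [:- e p, 1:])" for m
  define Q where "Q = (\<Sum>m\<in>{1..k}. smult (v m) (L m))"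
  have polyL: "poly (L m) (e i) = hcoef e k i m" for i m
    unfolding L_def hcoef_def by (simp add: poly_prod prod_dividef field_simps)
  have polyQ: "poly Q (e i) = enc e k v i" for i
    unfolding Q_def enc_def by (simp add: poly_sum polyL mult.commute)
  have degL: "degree (L m) \<le> k - 1" if "m \<in> {1..k}" for m
  proof -
    have "degree (L m) \<le> degree (\<Prod>p\<in>{1..k} - {m}. [:- e p, 1:])"
      unfolding L_def by (rule degree_smult_le)
    also have "\<dots> \<le> sum (degree \<circ> (\<lambda>p. [:- e p, 1:])) ({1..k} - {m})"
      by (rule degree_prod_sum_le) simp
    also have "\<dots> = card ({1..k} - {m})" by simp
    also have "\<dots> = k - 1" using that by simp
    finally show ?thesis .
  qed
  have degQ: "degree Q \<le> k - 1"
    unfolding Q_def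
    by (rule degree_sum_le) (use degL in \<open>auto intro: order.trans[OF degree_smult_le]\<close>)
  have k1: "k \<ge> 1" using m by simp
  have cA: "card (e ` P) = card P" using inj P by (meson card_image inj_on_subset)
  have "Q = 0"
  proof (rule poly_eqI_degree[where A = "e ` P"])
    show "\<And>x. x \<in> e ` P \<Longrightarrow> poly Q x = poly 0 x" using z polyQ by auto
    show "degree Q < card (e ` P)" using degQ cA cP k1 by linarith
    show "degree (0::'f poly) < card (e ` P)" using cA cP k1 by simp
  qed
  then have "enc e k v m = 0" using polyQ[of m] by simp
  moreover have "enc e k v m = v m"
  proof -
    have "enc e k v m = (\<Sum>m'\<in>{1..k}. (if m' = m then v m' else 0))"
      unfolding enc_def by (rule sum.cong) (use hcoef_diag[OF injk m] in auto)
    also have "\<dots> = v m" using m by simp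
    finally show ?thesis .
  qed
  ultimately show ?thesis by simp
qed
lemma kc_ge: "l \<le> kpar t * cpar n t l"
proof -
  have k: "real (kpar t) \<ge> 1" unfolding kpar_def by simp
  define y where "y = max (real l) ((real t / 5 + 1) * log 2 (real n + 1))"
  have "real l / real (kpar t) \<le> y / real (kpar t)" unfolding y_def using k
    by (intro divide_right_mono) auto
  also have "\<dots> \<le> of_int \<lceil>y / real (kpar t)\<rceil>" by (rule le_of_int_ceiling)
  also have "\<dots> = real (cpar n t l)"
  proof -
    have "y \<ge> 0" unfolding y_def by simp
    then have "y / real (kpar t) \<ge> 0" using k by simp
    then have "\<lceil>y / real (kpar t)\<rceil> \<ge> 0" by simp
    then show ?thesis unfolding cpar_def y_def by simp
  qed
  finally have "real l \<le> real (kpar t) * real (cpar n t l)" using k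
    by (simp add: field_simps)
  then show ?thesis by (simp flip: of_nat_mult)
qed

lemma msg_vec_inj:
  assumes lw: "length w = l" and lw': "length w' = l" and lkc: "l \<le> k * c"
    and binj: "inj_on bits {xs. length xs = c}"
    and eq: "\<forall>m\<in>{1..k}. msg_vec bits k c w m = msg_vec bits k c w' m"
  shows "w = w'"
proof -
  define pw where "pw = w @ replicate (k * c - length w) False"
  define pw' where "pw' = w' @ replicate (k * c - length w') False"
  have lp: "length pw = k * c" "length pw' = k * c" using lw lw' lkc unfolding pw_def pw'_def by auto
  have chunk: "take c (drop ((m - 1) * c) pw) = take c (drop ((m - 1) * c) pw')" if m: "m \<in> {1..k}" for m
  proof -
    have "(m - 1) * c + c \<le> k * c" using m
      by (metis add.commute atLeastAtMost_iff le_add_diff_inverse mult_Suc mult_le_mono1 plus_1_eq_Suc)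
    then have "length (take c (drop ((m - 1) * c) pw)) = c" "length (take c (drop ((m - 1) * c) pw')) = c"
      using lp by auto
    moreover have "bits (take c (drop ((m - 1) * c) pw)) = bits (take c (drop ((m - 1) * c) pw'))"
      using eq m unfolding msg_vec_def pw_def pw'_def by auto
    ultimately show ?thesis using binj by (auto dest: inj_onD)
  qed
  have "pw = pw'"
  proof (rule nth_equalityI)
    show "length pw = length pw'" using lp by simp
    fix x assume "x < length pw"
    then have x: "x < k * c" using lp by simp
    then have c0: "c > 0" by (cases c) auto
    define m where "m = x div c + 1"
    have "x div c < k" using x c0 by (simp add: div_less_iff_less_mult mult.commute)
    then have mk: "m \<in> {1..k}" unfolding m_def by simp
    have xe: "x = (m - 1) * c + x mod c" unfolding m_def by simp
    have xm: "x mod c < c" using c0 by simp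
    have dm: "x div c * c \<le> k * c" using x by (metis div_mult_mod_eq le_add1 le_trans less_imp_le)
    have "pw ! x = drop (x div c * c) pw ! (x mod c)"
      using dm lp by (simp add: nth_drop)
    also have "\<dots> = take c (drop ((m - 1) * c) pw) ! (x mod c)"
      using xm by (simp add: m_def)
    also have "\<dots> = take c (drop ((m - 1) * c) pw') ! (x mod c)" using chunk[OF mk] by simp
    also have "\<dots> = drop (x div c * c) pw' ! (x mod c)"
      using xm by (simp add: m_def)
    also have "\<dots> = pw' ! x"
      using dm lp by (simp add: nth_drop)
    finally show "pw ! x = pw' ! x" .
  qed
  then have "take l pw = take l pw'" by simp
  then show ?thesis unfolding pw_def pw'_def using lw lw' by simp
qed
lemma card_Un3_ge:
  assumes "finite A" "finite B" "finite C"
  shows "card A + card B + card C \<le> card (A \<union> B \<union> C) + card (A \<inter> B) + card (A \<inter> C) + card (B \<inter> C)"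
proof -
  have 1: "card (A \<union> B) + card (A \<inter> B) = card A + card B" using card_Un_Int[of A B] assms by simp
  have 2: "card (A \<union> B \<union> C) + card ((A \<union> B) \<inter> C) = card (A \<union> B) + card C" using card_Un_Int[of "A \<union> B" C] assms by simp
  have "card ((A \<union> B) \<inter> C) \<le> card (A \<inter> C) + card (B \<inter> C)"
    by (metis Int_Un_distrib2 card_Un_le)
  then show ?thesis using 1 2 by linarith
qed

theorem lemma13:
  fixes n t l :: nat and H :: "nat set" and w :: "nat \<Rightarrow> bool list"
    and e :: "nat \<Rightarrow> 'f::{field,finite}" and bits :: "bool list \<Rightarrow> 'f"
    and adv1 :: "nat \<Rightarrow> nat \<Rightarrow> 'f \<times> 'f" and adv2 :: "nat \<Rightarrow> nat \<Rightarrow> bool"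
  assumes "n \<ge> 3 * t + 1"
    and "H \<subseteq> {1..n}" and "card ({1..n} - H) \<le> t"
    and "\<forall>i\<in>H. length (w i) = l"
    and "card (UNIV :: 'f set) = 2 ^ cpar n t l"
    and "bij_betw bits {xs. length xs = cpar n t l} UNIV"
    and "inj_on e {1..n}" and "\<forall>i\<in>{1..n}. e i \<noteq> 0"
    and "eta H (succ2 n t H (Ycode e bits n t l w) adv1 adv2) w = 2"
  shows "eta H (succ1 n t H (Ycode e bits n t l w) adv1) w = 2"
proof -
  note nt = assms(1) and HS = assms(2) and dt = assms(3) and lw = assms(4)
  define Y where "Y = Ycode e bits n t l w"
  define k where "k = kpar t"
  define c where "c = cpar n t l"
  define V where "V i = msg_vec bits k c (w i)" for i
  define d where "d = card ({1..n} - H)"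
  have YV: "Y i j = enc e k (V i) j" for i j unfolding Y_def Ycode_def V_def k_def c_def by simp
  have kn: "k \<le> n" unfolding k_def kpar_def using nt by simp
  have binj: "inj_on bits {xs. length xs = c}" using assms(6) unfolding c_def bij_betw_def by simp
  have finH: "finite H" using HS finite_subset by blast
  have cH: "card H = n - d" 
  proof -
    have "card H \<le> n" using card_mono[OF _ HS] by simp
    then show ?thesis unfolding d_def using HS by (simp add: card_Diff_subset finite_subset)
  qed
  have Zsmall: "card {p \<in> {1..n}. Y x p = Y y p} < k" if xy: "x \<in> H" "y \<in> H" "w x \<noteq> w y" for x y
  proof (rule ccontr)
    assume "\<not> ?thesis"
    then have cP: "card {p \<in> {1..n}. Y x p = Y y p} \<ge> k" by simp
    have eqm: "\<forall>m\<in>{1..k}. V x m = V y m"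
    proof
      fix m assume m: "m \<in> {1..k}"
      have "(\<lambda>m. V x m - V y m) m = 0"
      proof (rule enc_zero[OF assms(7) kn _ cP _ m])
        show "{p \<in> {1..n}. Y x p = Y y p} \<subseteq> {1..n}" by auto
        show "\<forall>p\<in>{p \<in> {1..n}. Y x p = Y y p}. enc e k (\<lambda>m. V x m - V y m) p = 0"
          by (auto simp: YV enc_def right_diff_distrib sum_subtractf)
      qed
      then show "V x m = V y m" by simp
    qed
    have "w x = w y"
      by (rule msg_vec_inj[OF lw[rule_format, OF xy(1)] lw[rule_format, OF xy(2)]
            kc_ge[of l t n, folded k_def c_def] binj]) (use eqm in \<open>simp add: V_def\<close>)
    then show False using xy by simp
  qed
  define N where "N x = {j \<in> H. link1 H Y adv1 x j}" for x
  have Nint: "N x \<inter> N y \<subseteq> {p \<in> {1..n}. Y x p = Y y p}" if xy: "x \<in> H" "y \<in> H" "x \<noteq> y" for x y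
  proof
    fix j assume j: "j \<in> N x \<inter> N y"
    then have jH: "j \<in> H" and lx: "link1 H Y adv1 x j" and ly: "link1 H Y adv1 y j"
      unfolding N_def by auto
    have "Y x j = Y y j"
    proof (cases "j = x")
      case True then show ?thesis using ly xy jH unfolding link1_def by auto
    next
      case False
      note jx = False
      show ?thesis
      proof (cases "j = y")
        case True then show ?thesis using lx xy jH unfolding link1_def by auto
      next
        case False then show ?thesis using lx ly jx jH unfolding link1_def by auto
      qed
    qed
    then show "j \<in> {p \<in> {1..n}. Y x p = Y y p}" using jH HS by auto
  qed
  have Nfin: "finite (N x)" for x unfolding N_def using finH by simp
  have Nsize: "card (N x) + d \<ge> n - t" if "succ1 n t H Y adv1 x" for x
  proof -
    have "{j \<in> {1..n}. link1 H Y adv1 x j} \<subseteq> N x \<union> ({1..n} - H)" unfolding N_def by auto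
    then have "card {j \<in> {1..n}. link1 H Y adv1 x j} \<le> card (N x \<union> ({1..n} - H))"
      by (intro card_mono) (auto simp: Nfin)
    also have "\<dots> \<le> card (N x) + d" unfolding d_def by (rule card_Un_le)
    finally show ?thesis using that unfolding succ1_def by simp
  qed
  have NH: "N x \<subseteq> H" for x unfolding N_def by auto
  define F1 where "F1 = {i \<in> H. succ1 n t H Y adv1 i}"
  define F2 where "F2 = {i \<in> H. succ2 n t H Y adv1 adv2 i}"
  have F21: "F2 \<subseteq> F1" unfolding F1_def F2_def succ2_def by auto
  have finF1: "finite F1" unfolding F1_def using finH by simp
  have le3: "card (w ` F1) \<le> 2"
  proof (rule ccontr)
    assume "\<not> ?thesis"
    then have "3 \<le> card (w ` F1)" by simp
    then obtain T where T: "T \<subseteq> w ` F1" "card T = 3" by (rule obtain_subset_with_card_n)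
    then obtain a b cc where abc: "T = {a, b, cc}" "a \<noteq> b" "b \<noteq> cc" "a \<noteq> cc"
      by (auto simp: card_3_iff)
    then have "a \<in> w ` F1" "b \<in> w ` F1" "cc \<in> w ` F1" using T by auto
    then obtain x y z where xyz: "x \<in> F1" "y \<in> F1" "z \<in> F1" "w x = a" "w y = b" "w z = cc"
      by (metis imageE)
    have inH: "x \<in> H" "y \<in> H" "z \<in> H" using xyz unfolding F1_def by auto
    have s: "n - t \<le> card (N x) + d" "n - t \<le> card (N y) + d" "n - t \<le> card (N z) + d"
      using Nsize xyz(1-3) unfolding F1_def by simp_all
    have i1: "card (N x \<inter> N y) < k"
    proof -
      have "x \<noteq> y" using xyz abc by auto
      then have "N x \<inter> N y \<subseteq> {p \<in> {1..n}. Y x p = Y y p}" using Nint inH by blast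
      then have "card (N x \<inter> N y) \<le> card {p \<in> {1..n}. Y x p = Y y p}" by (intro card_mono) auto
      moreover have "w x \<noteq> w y" using xyz abc by simp
      then have "card {p \<in> {1..n}. Y x p = Y y p} < k" using Zsmall inH by blast
      ultimately show ?thesis by linarith
    qed
    have i2: "card (N x \<inter> N z) < k"
    proof -
      have "x \<noteq> z" using xyz abc by auto
      then have "N x \<inter> N z \<subseteq> {p \<in> {1..n}. Y x p = Y z p}" using Nint inH by blast
      then have "card (N x \<inter> N z) \<le> card {p \<in> {1..n}. Y x p = Y z p}" by (intro card_mono) auto
      moreover have "w x \<noteq> w z" using xyz abc by simp
      then have "card {p \<in> {1..n}. Y x p = Y z p} < k" using Zsmall inH by blast
      ultimately show ?thesis by linarith
    qed
    have i3: "card (N y \<inter> N z) < k"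
    proof -
      have "y \<noteq> z" using xyz abc by auto
      then have "N y \<inter> N z \<subseteq> {p \<in> {1..n}. Y y p = Y z p}" using Nint inH by blast
      then have "card (N y \<inter> N z) \<le> card {p \<in> {1..n}. Y y p = Y z p}" by (intro card_mono) auto
      moreover have "w y \<noteq> w z" using xyz abc by simp
      then have "card {p \<in> {1..n}. Y y p = Y z p} < k" using Zsmall inH by blast
      ultimately show ?thesis by linarith
    qed
    have u: "card (N x \<union> N y \<union> N z) \<le> n - d"
    proof -
      have "N x \<union> N y \<union> N z \<subseteq> H" using NH by blast
      then have "card (N x \<union> N y \<union> N z) \<le> card H" using finH by (intro card_mono)
      then show ?thesis using cH by simp
    qed
    have "card (N x) + card (N y) + card (N z) \<le> card (N x \<union> N y \<union> N z) + card (N x \<inter> N y) + card (N x \<inter> N z) + card (N y \<inter> N z)"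
      by (rule card_Un3_ge) (auto simp: Nfin)
    moreover have "d \<le> t" using dt unfolding d_def .
    moreover have "5 * (t div 5) \<le> t" by simp
    moreover have "k = t div 5 + 1" unfolding k_def kpar_def by simp
    moreover have "n - d = n - d" ..
    ultimately show False using s i1 i2 i3 u nt by linarith
  qed
  have "card (w ` F2) \<le> card (w ` F1)" using F21 finF1 by (intro card_mono) auto
  moreover have "card (w ` F2) = 2" using assms(9) unfolding eta_def F2_def Y_def .
  ultimately show ?thesis using le3 unfolding eta_def F1_def Y_def by simp
qed

end
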